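(* Let $G=(V,v,E)$ be a directed graph with node set $V=\{1,\dots,n\}$, target node $v\in V$ and edge set $E$, and let $Z$ be a set of ordered pairs of nodes (hidden edges) with $Z\cap E=\emptyset$. For $\mathbf{y}\in\{0,1\}^{Z}$ with support $Y=\{(i,j)\in Z: y_{(i,j)}=1\}$, let $\mathcal{FR}(\mathbf{y})$ denote the expected first return time to $v$ of the PageRank random walk on the graph $(V,E\cup Y)$. Let $\mathcal{Y}$ be a set of constraints on $\mathbf{y}$ with $\mathcal{Y}\cap\{0,1\}^{Z}\neq\emptyset$. For disjoint $S,N\subseteq Z$ let $$\gamma(S,N)=\min\{\mathcal{FR}(\mathbf{y}): y_{(i,j)}=1\ \forall (i,j)\in S,\ y_{(i,j)}=0\ \forall (i,j)\in N,\ \mathbf{y}\in\{0,1\}^{Z}\}.$$ Let $\bar{\mathbf{y}}\in\mathcal{Y}\cap\{0,1\}^{Z}$ with support $\bar Y$. Then the inequality $$\theta\ \ge\ \mathcal{FR}(\bar{\mathbf{y}})+\sum_{(i,j)\in\bar Y}\min\{0,\gamma(\emptyset,\{(i,j)\})-\mathcal{FR}(\bar{\mathbf{y}})\}(1-y_{(i,j)})+\sum_{(i,j)\in Z\setminus\bar Y}\min\{0,\gamma(\{(i,j)\},\emptyset)-\mathcal{FR}(\bar{\mathbf{y}})\}\,y_{(i,j)}$$ is valid, i.e. it is satisfied by every pair $(\theta,\mathbf{y})$ with $\mathbf{y}\in\mathcal{Y}\cap\{0,1\}^{Z}$, $\theta\in\mathbb{R}_+$ and $\theta\ge\mathcal{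FR}(\mathbf{y})$.
   Context: The PageRank value of $v$ equals the reciprocal of the expected first return time to $v$ (expected number of steps for the PageRank random walk, i.e. the random walk defined by the PageRank/Google matrix with fixed damping and teleportation as in Csáji–Jungers–Blondel, started at $v$ to return to $v$). In particular $\mathcal{FR}(\mathbf{y})\ge 0$ for all $\mathbf{y}$. The optimization problem considered is $\min\{\mathcal{FR}(\mathbf{y}):\mathbf{y}\in\mathcal{Y}\cap\{0,1\}^{Z}\}$, written in epigraph form with a variable $\theta\in\mathbb{R}_+$ satisfying $\theta\ge\mathcal{FR}(\mathbf{y})$. *)

theory Defs
  imports Complex_Main
begin

text \<open>PageRank (Google) matrix with damping c and teleportation distribution z:
  G i j = (1 - c) * P i j + c * z j, where P i j = 1/outdeg i for (i,j) in E',
  and dangling nodes (outdeg 0) jump according to z.\<close>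

definition outdeg :: "nat \<Rightarrow> (nat \<times> nat) set \<Rightarrow> nat \<Rightarrow> nat" where
  "outdeg n E' i = card {j \<in> {1..n}. (i, j) \<in> E'}"

definition linkmat :: "nat \<Rightarrow> (nat \<Rightarrow> real) \<Rightarrow> (nat \<times> nat) set \<Rightarrow> nat \<Rightarrow> nat \<Rightarrow> real" where
  "linkmat n z E' i j =
     (if outdeg n E' i = 0 then z j
      else if (i, j) \<in> E' then 1 / real (outdeg n E' i) else 0)"

definition google :: "nat \<Rightarrow> real \<Rightarrow> (nat \<Rightarrow> real) \<Rightarrow> (nat \<times> nat) set \<Rightarrow> nat \<Rightarrow> nat \<Rightarrow> real" where
  "google n c z E' i j = (1 - c) * linkmat n z E' i j + c * z j"

text \<open>taboo n c z E' v t j: probability that the PageRank walk started at v is at node j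
  at time t without having visited v at any of the times 1..t.\<close>

primrec taboo :: "nat \<Rightarrow> real \<Rightarrow> (nat \<Rightarrow> real) \<Rightarrow> (nat \<times> nat) set \<Rightarrow> nat \<Rightarrow> nat \<Rightarrow> nat \<Rightarrow> real" where
  "taboo n c z E' v 0 j = (if j = v then 1 else 0)"
| "taboo n c z E' v (Suc t) k =
     (if k = v then 0 else (\<Sum>j\<in>{1..n}. taboo n c z E' v t j * google n c z E' j k))"

text \<open>Probability that the first return to v happens at step t+1, and the expected
  first return time to v of the PageRank random walk on the graph ({1..n}, E').\<close>

definition first_return_prob :: "nat \<Rightarrow> real \<Rightarrow> (nat \<Rightarrow> real) \<Rightarrow> (nat \<times> nat) set \<Rightarrow> nat \<Rightarrow> nat \<Rightarrow> real" where
  "first_return_prob n c z E' v t = (\<Sum>j\<in>{1..n}. taboo n c z E' v t j * google n c z E' j v)"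

definition exp_first_return :: "nat \<Rightarrow> real \<Rightarrow> (nat \<Rightarrow> real) \<Rightarrow> (nat \<times> nat) set \<Rightarrow> nat \<Rightarrow> real" where
  "exp_first_return n c z E' v = (\<Sum>t. real (Suc t) * first_return_prob n c z E' v t)"

definition binvecs :: "(nat \<times> nat) set \<Rightarrow> (nat \<times> nat \<Rightarrow> real) set" where
  "binvecs Z = {y. (\<forall>e\<in>Z. y e = 0 \<or> y e = 1) \<and> (\<forall>e. e \<notin> Z \<longrightarrow> y e = 0)}"

definition supp :: "(nat \<times> nat) set \<Rightarrow> (nat \<times> nat \<Rightarrow> real) \<Rightarrow> (nat \<times> nat) set" where
  "supp Z y = {e \<in> Z. y e = 1}"

definition FR :: "nat \<Rightarrow> real \<Rightarrow> (nat \<Rightarrow> real) \<Rightarrow> (nat \<times> nat) set \<Rightarrow> nat \<Rightarrow> (nat \<times> nat) set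
    \<Rightarrow> (nat \<times> nat \<Rightarrow> real) \<Rightarrow> real" where
  "FR n c z E v Z y = exp_first_return n c z (E \<union> supp Z y) v"

definition gamma :: "nat \<Rightarrow> real \<Rightarrow> (nat \<Rightarrow> real) \<Rightarrow> (nat \<times> nat) set \<Rightarrow> nat \<Rightarrow> (nat \<times> nat) set
    \<Rightarrow> (nat \<times> nat) set \<Rightarrow> (nat \<times> nat) set \<Rightarrow> real" where
  "gamma n c z E v Z S N =
     Min {FR n c z E v Z y | y. y \<in> binvecs Z \<and> (\<forall>e\<in>S. y e = 1) \<and> (\<forall>e\<in>N. y e = 0)}"

end

theory Submission
  imports Defs
begin

lemma FR_set_finite:
  assumes "finite Z"
  shows "finite {FR n c z E v Z y | y. y \<in> binvecs Z \<and> (\<forall>e\<in>S. y e = 1) \<and> (\<forall>e\<in>N. y e = 0)}"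
proof -
  have "{FR n c z E v Z y | y. y \<in> binvecs Z \<and> (\<forall>e\<in>S. y e = 1) \<and> (\<forall>e\<in>N. y e = 0)}
        \<subseteq> (\<lambda>Y. exp_first_return n c z (E \<union> Y) v) ` Pow Z"
    by (auto simp: FR_def supp_def)
  then show ?thesis using assms by (meson finite_Pow_iff finite_imageI finite_subset)
qed

lemma gamma_le:
  assumes "finite Z" "y \<in> binvecs Z" "\<forall>e\<in>S. y e = 1" "\<forall>e\<in>N. y e = 0"
  shows "gamma n c z E v Z S N \<le> FR n c z E v Z y"
  unfolding gamma_def
  by (rule Min_le[OF FR_set_finite[OF assms(1)]]) (use assms in blast)

lemma sum_le_single:
  fixes f :: "'a \<Rightarrow> real"
  assumes "finite A" "e \<in> A" "\<forall>x\<in>A. f x \<le> 0"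
  shows "sum f A \<le> f e"
proof -
  have "sum f A = f e + sum f (A - {e})" using assms by (simp add: sum.remove)
  moreover have "sum f (A - {e}) \<le> 0" using assms by (intro sum_nonpos) auto
  ultimately show ?thesis by simp
qed

theorem theorem1:
  fixes n v :: nat and E Z :: "(nat \<times> nat) set" and c :: real and z :: "nat \<Rightarrow> real"
    and Ycal :: "(nat \<times> nat \<Rightarrow> real) set" and ybar y :: "nat \<times> nat \<Rightarrow> real" and \<theta> :: real
  assumes "v \<in> {1..n}"
    and "E \<subseteq> {1..n} \<times> {1..n}"
    and "Z \<subseteq> {1..n} \<times> {1..n}"
    and "Z \<inter> E = {}"
    and "0 < c" and "c < 1"
    and "\<forall>i\<in>{1..n}. 0 < z i" and "(\<Sum>i\<in>{1..n}. z i) = 1"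
    and "Ycal \<inter> binvecs Z \<noteq> {}"
    and "ybar \<in> Ycal \<inter> binvecs Z"
    and "y \<in> Ycal \<inter> binvecs Z"
    and "0 \<le> \<theta>"
    and "\<theta> \<ge> FR n c z E v Z y"
  shows "\<theta> \<ge> FR n c z E v Z ybar
      + (\<Sum>e\<in>supp Z ybar. min 0 (gamma n c z E v Z {} {e} - FR n c z E v Z ybar) * (1 - y e))
      + (\<Sum>e\<in>Z - supp Z ybar. min 0 (gamma n c z E v Z {e} {} - FR n c z E v Z ybar) * y e)"
proof -
  define F where "F = FR n c z E v Z ybar"
  define f1 where "f1 = (\<lambda>e. min 0 (gamma n c z E v Z {} {e} - F) * (1 - y e))"
  define f2 where "f2 = (\<lambda>e. min 0 (gamma n c z E v Z {e} {} - F) * y e)"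
  have finZ: "finite Z" using assms(3) by (rule finite_subset) simp
  have yb: "y \<in> binvecs Z" using assms(11) by blast
  have ybb: "ybar \<in> binvecs Z" using assms(10) by blast
  have y01: "\<And>e. e \<in> Z \<Longrightarrow> y e = 0 \<or> y e = 1" using yb by (simp add: binvecs_def)
  have fin1: "finite (supp Z ybar)" using finZ by (simp add: supp_def)
  have fin2: "finite (Z - supp Z ybar)" using finZ by simp
  have sZ: "supp Z ybar \<subseteq> Z" by (auto simp: supp_def)
  have n1: "\<forall>e\<in>supp Z ybar. f1 e \<le> 0"
  proof
    fix e assume "e \<in> supp Z ybar"
    then have "0 \<le> 1 - y e" using y01 sZ by fastforce
    then show "f1 e \<le> 0" unfolding f1_def by (simp add: mult_nonpos_nonneg)
  qed
  have n2: "\<forall>e\<in>Z - supp Z ybar. f2 e \<le> 0"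
  proof
    fix e assume "e \<in> Z - supp Z ybar"
    then have "0 \<le> y e" using y01 by fastforce
    then show "f2 e \<le> 0" unfolding f2_def by (simp add: mult_nonpos_nonneg)
  qed
  have s1: "sum f1 (supp Z ybar) \<le> 0" using n1 by (intro sum_nonpos) auto
  have s2: "sum f2 (Z - supp Z ybar) \<le> 0" using n2 by (intro sum_nonpos) auto
  have "F + sum f1 (supp Z ybar) + sum f2 (Z - supp Z ybar) \<le> \<theta>"
  proof (cases "\<exists>e\<in>supp Z ybar. y e = 0")
    case True
    then obtain e where e: "e \<in> supp Z ybar" "y e = 0" by blast
    have g: "gamma n c z E v Z {} {e} \<le> FR n c z E v Z y"
      using e by (intro gamma_le[OF finZ yb]) auto
    have "sum f1 (supp Z ybar) \<le> f1 e" using sum_le_single[OF fin1 e(1) n1] .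
    also have "f1 e = min 0 (gamma n c z E v Z {} {e} - F)" using e by (simp add: f1_def)
    finally show ?thesis using s2 g assms(13) by linarith
  next
    case False
    note F1 = False
    show ?thesis
    proof (cases "\<exists>e\<in>Z - supp Z ybar. y e = 1")
      case True
      then obtain e where e: "e \<in> Z - supp Z ybar" "y e = 1" by blast
      have g: "gamma n c z E v Z {e} {} \<le> FR n c z E v Z y"
        using e by (intro gamma_le[OF finZ yb]) auto
      have "sum f2 (Z - supp Z ybar) \<le> f2 e" using sum_le_single[OF fin2 e(1) n2] .
      also have "f2 e = min 0 (gamma n c z E v Z {e} {} - F)" using e by (simp add: f2_def)
      finally show ?thesis using s1 g assms(13) by linarith
    next
      case False
      have "supp Z y = supp Z ybar"
        using F1 False y01 sZ unfolding supp_def by fastforce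
      then have "F = FR n c z E v Z y" by (simp add: F_def FR_def)
      then show ?thesis using s1 s2 assms(13) by linarith
    qed
  qed
  then show ?thesis unfolding F_def f1_def f2_def by simp
qed

end
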